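(* Let $k,l$ be positive integers with $k \ge 3l$. Then every graph $G$ with $\chi(G) > k$ contains a weakly $l$-connected subgraph $H$ such that $\chi(H) > k-2l$.
   Context: Graphs are finite and simple; $\chi$ denotes the chromatic number. A separation of a graph $G$ is a pair $(A,B)$ with $A\cup B=V(G)$ such that every edge has both ends in $A$ or both ends in $B$; it is proper if $A-B\neq\emptyset$ and $B-A\neq\emptyset$; its order is $|A\cap B|$. A graph $G$ is weakly $k$-connected if for every proper separation $(A,B)$ of $G$ of order at most $k$ we have $\min\{|A-B|,|B-A|\} < |A\cap B|$. *)

theory Defs
  imports Main
begin

definition graph :: "'a set \<Rightarrow> 'a set set \<Rightarrow> bool" where
  "graph V E \<longleftrightarrow> finite V \<and> (\<forall>e\<in>E. \<exists>u v. u \<noteq> v \<and> u \<in> V \<and> v \<in> V \<and> e = {u, v})"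

definition subgraph :: "'a set \<Rightarrow> 'a set set \<Rightarrow> 'a set \<Rightarrow> 'a set set \<Rightarrow> bool" where
  "subgraph VH EH V E \<longleftrightarrow> graph VH EH \<and> VH \<subseteq> V \<and> EH \<subseteq> E"

definition colourable :: "'a set \<Rightarrow> 'a set set \<Rightarrow> nat \<Rightarrow> bool" where
  "colourable V E k \<longleftrightarrow> (\<exists>f :: 'a \<Rightarrow> nat. (\<forall>v\<in>V. f v < k) \<and>
      (\<forall>e\<in>E. \<forall>u v. e = {u, v} \<and> u \<noteq> v \<longrightarrow> f u \<noteq> f v))"

definition chromatic_number :: "'a set \<Rightarrow> 'a set set \<Rightarrow> nat" where
  "chromatic_number V E = (LEAST k. colourable V E k)"

definition separation :: "'a set \<Rightarrow> 'a set set \<Rightarrow> 'a set \<Rightarrow> 'a set \<Rightarrow> bool" where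
  "separation V E A B \<longleftrightarrow> A \<union> B = V \<and> (\<forall>e\<in>E. e \<subseteq> A \<or> e \<subseteq> B)"

definition proper_separation :: "'a set \<Rightarrow> 'a set set \<Rightarrow> 'a set \<Rightarrow> 'a set \<Rightarrow> bool" where
  "proper_separation V E A B \<longleftrightarrow> separation V E A B \<and> A - B \<noteq> {} \<and> B - A \<noteq> {}"

definition sep_order :: "'a set \<Rightarrow> 'a set \<Rightarrow> nat" where
  "sep_order A B = card (A \<inter> B)"

definition weakly_connected :: "nat \<Rightarrow> 'a set \<Rightarrow> 'a set set \<Rightarrow> bool" where
  "weakly_connected k V E \<longleftrightarrow>
     (\<forall>A B. proper_separation V E A B \<and> sep_order A B \<le> k \<longrightarrow>
        min (card (A - B)) (card (B - A)) < card (A \<inter> B))"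

end

theory Submission
  imports Defs
begin

definition ind :: "'a set set \<Rightarrow> 'a set \<Rightarrow> 'a set set" where
  "ind E W = {e \<in> E. e \<subseteq> W}"

lemma col_mono: assumes "colourable V E c" "c \<le> d" shows "colourable V E d"
proof -
  obtain f where "\<forall>v\<in>V. f v < c" "\<forall>e\<in>E. \<forall>u v. e = {u, v} \<and> u \<noteq> v \<longrightarrow> f u \<noteq> f v"
    using assms(1) unfolding colourable_def by blast
  then show ?thesis unfolding colourable_def using assms(2)
    by (intro exI[of _ f]) (auto intro: order_less_le_trans)
qed

lemma col_sub: assumes "colourable X (ind E X) c" "Y \<subseteq> X" shows "colourable Y (ind E Y) c"
proof -
  obtain f where f1: "\<forall>v\<in>X. f v < c"
    and f2: "\<forall>e\<in>ind E X. \<forall>u v. e = {u, v} \<and> u \<noteq> v \<longrightarrow> f u \<noteq> f v"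
    using assms(1) unfolding colourable_def by blast
  have "\<forall>v\<in>Y. f v < c" using f1 assms(2) by auto
  moreover have "\<forall>e\<in>ind E Y. \<forall>u v. e = {u, v} \<and> u \<noteq> v \<longrightarrow> f u \<noteq> f v"
  proof (intro ballI allI impI)
    fix e u v assume "e \<in> ind E Y" "e = {u, v} \<and> u \<noteq> v"
    moreover then have "e \<in> ind E X" using assms(2) unfolding ind_def by auto
    ultimately show "f u \<noteq> f v" using f2 by blast
  qed
  ultimately show ?thesis unfolding colourable_def by blast
qed

lemma col_card: assumes "finite U" shows "colourable U (ind E U) (card U)"
proof -
  obtain f where f: "bij_betw f U {0..<card U}" using ex_bij_betw_finite_nat[OF assms] by blast
  show ?thesis unfolding colourable_def ind_def
  proof (intro exI[of _ f] conjI ballI allI impI)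
    fix v assume "v \<in> U" thus "f v < card U" using f by (auto simp: bij_betw_def)
  next
    fix e u v assume "e \<in> {e\<in>E. e \<subseteq> U}" "e = {u,v} \<and> u \<noteq> v"
    then have "u \<in> U" "v \<in> U" "u\<noteq>v" by auto
    thus "f u \<noteq> f v" using f by (auto simp: bij_betw_def inj_on_def)
  qed
qed

lemma chrom_le: "colourable V E c \<Longrightarrow> chromatic_number V E \<le> c"
  unfolding chromatic_number_def by (rule Least_le)

lemma chrom_gt: assumes "finite V" "\<forall>e\<in>E. e \<subseteq> V" "\<not> colourable V E c"
  shows "c < chromatic_number V E"
proof (rule ccontr)
  assume "\<not> c < chromatic_number V E"
  hence le: "chromatic_number V E \<le> c" by simp
  have "ind E V = E" using assms(2) unfolding ind_def by auto
  hence ex: "colourable V E (card V)" using col_card[OF assms(1), of E] by simp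
  have "colourable V E (chromatic_number V E)" unfolding chromatic_number_def by (rule LeastI[of "colourable V E", OF ex])
  then have "colourable V E c" using col_mono le by blast
  thus False using assms(3) by simp
qed

lemma interior:
  assumes finW: "finite W"
  and minW: "\<And>Y. Y \<subseteq> W \<Longrightarrow> Y \<noteq> W \<Longrightarrow> colourable Y (ind E Y) k"
  and notW: "\<not> colourable W (ind E W) k"
  and XY: "X \<union> Y = W" and sepE: "\<forall>e\<in>ind E W. e \<subseteq> X \<or> e \<subseteq> Y"
  and ne: "X - Y \<noteq> {}" and ck: "c + card (X \<inter> Y) \<le> k"
  shows "\<not> colourable (X - Y) (ind E (X - Y)) c"
proof
  assume "colourable (X - Y) (ind E (X - Y)) c"
  then obtain f where f1: "\<forall>v\<in>X-Y. f v < c"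
    and f2: "\<forall>e\<in>ind E (X-Y). \<forall>u v. e = {u,v} \<and> u \<noteq> v \<longrightarrow> f u \<noteq> f v"
    unfolding colourable_def by blast
  have "Y \<subseteq> W" "Y \<noteq> W" using XY ne by auto
  then have "colourable Y (ind E Y) k" by (rule minW)
  then obtain g where g1: "\<forall>v\<in>Y. g v < k"
    and g2: "\<forall>e\<in>ind E Y. \<forall>u v. e = {u,v} \<and> u \<noteq> v \<longrightarrow> g u \<noteq> g v"
    unfolding colourable_def by blast
  define S where "S = X \<inter> Y"
  have "S \<subseteq> W" using XY S_def by auto
  then have finS: "finite S" using finW finite_subset by blast
  have ckS: "c + card S \<le> k" using ck S_def by simp
  have c1: "card (g ` S) \<le> card S" by (rule card_image_le[OF finS])
  have c2: "card {..<k} - card (g ` S) \<le> card ({..<k} - g ` S)"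
    by (rule diff_card_le_card_Diff) (use finS in auto)
  have "c \<le> card ({..<k} - g ` S)" using c1 c2 ckS by simp
  then have cardc: "card {..<c} \<le> card ({..<k} - g ` S)" by simp
  obtain p where p1: "p ` {..<c} \<subseteq> {..<k} - g ` S" and p2: "inj_on p {..<c}"
    using card_le_inj[of "{..<c}" "{..<k} - g ` S", OF finite_lessThan _ cardc] by blast
  define h where "h v = (if v \<in> Y then g v else p (f v))" for v
  have "colourable W (ind E W) k"
    unfolding colourable_def
  proof (intro exI[of _ h] conjI ballI allI impI)
    fix v assume "v \<in> W"
    show "h v < k"
    proof (cases "v \<in> Y")
      case True thus ?thesis using g1 h_def by simp
    next
      case False
      then have "v \<in> X - Y" using \<open>v\<in>W\<close> XY by auto
      then have "f v \<in> {..<c}" using f1 by auto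
      then have "p (f v) \<in> {..<k}" using p1 by auto
      thus ?thesis using False h_def by simp
    qed
  next
    fix e u v assume e: "e \<in> ind E W" and uv: "e = {u,v} \<and> u \<noteq> v"
    have eE: "e \<in> E" using e ind_def by auto
    from sepE e have eXY: "e \<subseteq> X \<or> e \<subseteq> Y" by blast
    show "h u \<noteq> h v"
    proof (cases "u \<in> Y")
      case uY: True
      show ?thesis
      proof (cases "v \<in> Y")
        case vY: True
        have "e \<in> ind E Y" using eE uY vY uv ind_def by auto
        thus ?thesis using g2 uv uY vY h_def by auto
      next
        case vY: False
        then have "e \<subseteq> X" using eXY uv by auto
        then have "u \<in> S" using uY uv S_def by auto
        have "v \<in> X - Y" using vY \<open>e\<subseteq>X\<close> uv by auto
        then have "p (f v) \<notin> g ` S" using f1 p1 by auto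
        moreover have "g u \<in> g ` S" using \<open>u\<in>S\<close> by blast
        ultimately show ?thesis using uY vY h_def by force
      qed
    next
      case uY: False
      show ?thesis
      proof (cases "v \<in> Y")
        case vY: True
        then have "e \<subseteq> X" using eXY uv uY by auto
        then have "v \<in> S" using vY uv S_def by auto
        have "u \<in> X - Y" using uY \<open>e\<subseteq>X\<close> uv by auto
        then have "p (f u) \<notin> g ` S" using f1 p1 by auto
        moreover have "g v \<in> g ` S" using \<open>v\<in>S\<close> by blast
        ultimately show ?thesis using uY vY h_def by force
      next
        case vY: False
        then have "e \<subseteq> X" using eXY uv uY by auto
        have "e \<in> ind E (X - Y)" using eE \<open>e \<subseteq> X\<close> uY vY uv ind_def by auto
        then have "f u \<noteq> f v" using f2 uv by blast
        moreover have "f u \<in> {..<c}" "f v \<in> {..<c}"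
          using f1 uY vY \<open>e \<subseteq> X\<close> uv by auto
        ultimately have "p (f u) \<noteq> p (f v)" using p2 unfolding inj_on_def by blast
        thus ?thesis using h_def uY vY by simp
      qed
    qed
  qed
  thus False using notW by simp
qed

theorem lemma2p1:
  fixes k l :: nat and V :: "'a set" and E :: "'a set set"
  assumes "l > 0" and "k > 0" and "k \<ge> 3 * l"
    and "graph V E" and "chromatic_number V E > k"
  shows "\<exists>VH EH. subgraph VH EH V E \<and> weakly_connected l VH EH
           \<and> chromatic_number VH EH > k - 2 * l"
proof -
  have finV: "finite V" and edges: "\<forall>e\<in>E. \<exists>u v. u \<noteq> v \<and> u \<in> V \<and> v \<in> V \<and> e = {u,v}"
    using assms(4) unfolding graph_def by auto
  have EV: "\<forall>e\<in>E. e \<subseteq> V" using edges by auto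
  have indV: "ind E V = E" using EV unfolding ind_def by auto
  have notV: "\<not> colourable V (ind E V) k" 
  proof
    assume "colourable V (ind E V) k"
    then have "chromatic_number V E \<le> k" using chrom_le indV by simp
    thus False using assms(5) by simp
  qed
  define P where "P W \<longleftrightarrow> W \<subseteq> V \<and> \<not> colourable W (ind E W) k" for W
  have "P V" using notV P_def by simp
  then obtain W where PW: "P W" and Wmin: "\<And>Y. P Y \<Longrightarrow> card W \<le> card Y"
    using ex_has_least_nat[of P V card] by blast
  have WV: "W \<subseteq> V" and notW: "\<not> colourable W (ind E W) k" using PW P_def by auto
  have finW: "finite W" using WV finV finite_subset by blast
  have minW: "colourable Y (ind E Y) k" if "Y \<subseteq> W" "Y \<noteq> W" for Y
  proof -
    have "card Y < card W" using finW that psubset_card_mono by blast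
    then have "\<not> P Y" using Wmin not_le by blast
    thus "colourable Y (ind E Y) k" using that WV P_def by auto
  qed
  have Wne: "W \<noteq> {}"
  proof
    assume "W = {}"
    then have "colourable W (ind E W) k" unfolding colourable_def ind_def by (intro exI[of _ "\<lambda>_. 0"]) auto
    thus False using notW by simp
  qed
  define Q where "Q X \<longleftrightarrow> (\<exists>Y. X \<union> Y = W \<and> (\<forall>e\<in>ind E W. e \<subseteq> X \<or> e \<subseteq> Y)
                    \<and> card (X \<inter> Y) \<le> 2*l \<and> X - Y \<noteq> {})" for X
  have "Q W" unfolding Q_def using Wne by (intro exI[of _ "{}"]) (auto simp: ind_def)
  then obtain X where QX: "Q X" and Xmin: "\<And>X'. Q X' \<Longrightarrow> card X \<le> card X'"
    using ex_has_least_nat[of Q W card] by blast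
  then obtain Y where XY: "X \<union> Y = W" and sepE: "\<forall>e\<in>ind E W. e \<subseteq> X \<or> e \<subseteq> Y"
    and cS: "card (X \<inter> Y) \<le> 2*l" and ne: "X - Y \<noteq> {}" unfolding Q_def by blast
  have XW: "X \<subseteq> W" using XY by auto
  have finX: "finite X" using XW finW finite_subset by blast
  have key: "\<not> colourable (X - Y) (ind E (X - Y)) c" if "c + card (X \<inter> Y) \<le> k" for c
    using interior[OF finW minW notW XY sepE ne that] by blast
  show ?thesis
  proof (intro exI[of _ X] exI[of _ "ind E X"] conjI)
    show "subgraph X (ind E X) V E"
      unfolding subgraph_def graph_def
    proof (intro conjI ballI)
      show "finite X" by (rule finX)
      fix e assume "e \<in> ind E X"
      then have "e \<in> E" "e \<subseteq> X" unfolding ind_def by auto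
      moreover obtain u v where "u \<noteq> v" "e = {u, v}" using edges \<open>e \<in> E\<close> by blast
      ultimately show "\<exists>u v. u \<noteq> v \<and> u \<in> X \<and> v \<in> X \<and> e = {u, v}" by blast
    next
      show "X \<subseteq> V" using XW WV by auto
      show "ind E X \<subseteq> E" unfolding ind_def by auto
    qed
    show "k - 2 * l < chromatic_number X (ind E X)"
    proof (rule chrom_gt)
      show "finite X" by (rule finX)
      show "\<forall>e\<in>ind E X. e \<subseteq> X" unfolding ind_def by auto
      show "\<not> colourable X (ind E X) (k - 2 * l)"
      proof
        assume "colourable X (ind E X) (k - 2 * l)"
        then have "colourable (X - Y) (ind E (X - Y)) (k - 2 * l)" using col_sub by blast
        moreover have "k - 2 * l + card (X \<inter> Y) \<le> k" using cS assms(3) by linarith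
        ultimately show False using key by blast
      qed
    qed
    show "weakly_connected l X (ind E X)"
      unfolding weakly_connected_def
    proof (intro allI impI)
      fix C D assume H: "proper_separation X (ind E X) C D \<and> sep_order C D \<le> l"
      show "min (card (C - D)) (card (D - C)) < card (C \<inter> D)"
      proof (rule ccontr)
        assume "\<not> min (card (C - D)) (card (D - C)) < card (C \<inter> D)"
        then have tC: "card (C \<inter> D) \<le> card (C - D)" and tD: "card (C \<inter> D) \<le> card (D - C)" by auto
        from H have CD: "C \<union> D = X" and sepCD: "\<forall>e\<in>ind E X. e \<subseteq> C \<or> e \<subseteq> D"
          and CmD: "C - D \<noteq> {}" and DmC: "D - C \<noteq> {}" and tl: "card (C \<inter> D) \<le> l"
          unfolding proper_separation_def separation_def sep_order_def by auto
        define T where "T = C \<inter> D"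
        define S where "S = X \<inter> Y"
        have finC: "finite C" "finite D" "finite S" "finite T" using finX CD S_def T_def by auto
        have sep1: "\<forall>e\<in>ind E W. e \<subseteq> C \<or> e \<subseteq> D \<union> Y"
        proof
          fix e assume e: "e \<in> ind E W"
          from sepE e have "e \<subseteq> X \<or> e \<subseteq> Y" by blast
          thus "e \<subseteq> C \<or> e \<subseteq> D \<union> Y"
          proof
            assume "e \<subseteq> X" then have "e \<in> ind E X" using e unfolding ind_def by auto
            then show ?thesis using sepCD by blast
          qed auto
        qed
        have sep2: "\<forall>e\<in>ind E W. e \<subseteq> D \<or> e \<subseteq> C \<union> Y"
        proof
          fix e assume e: "e \<in> ind E W"
          from sepE e have "e \<subseteq> X \<or> e \<subseteq> Y" by blast
          thus "e \<subseteq> D \<or> e \<subseteq> C \<union> Y"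
          proof
            assume "e \<subseteq> X" then have "e \<in> ind E X" using e unfolding ind_def by auto
            then show ?thesis using sepCD by blast
          qed auto
        qed
        have u1: "C \<union> (D \<union> Y) = W" and u2: "D \<union> (C \<union> Y) = W" using CD XY by auto
        have cardC: "card C < card X"
        proof (rule psubset_card_mono[OF finX])
          show "C \<subset> X" using CD DmC by blast
        qed
        have cardD: "card D < card X"
        proof (rule psubset_card_mono[OF finX])
          show "D \<subset> X" using CD CmD by blast
        qed
        have c1: "C - (D \<union> Y) = {}" if "card (C \<inter> (D \<union> Y)) \<le> 2*l"
        proof (rule ccontr)
          assume "C - (D \<union> Y) \<noteq> {}"
          then have "Q C" unfolding Q_def using u1 sep1 that by blast
          then have "card X \<le> card C" by (rule Xmin)
          then show False using cardC by simp
        qed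
        have c2: "D - (C \<union> Y) = {}" if "card (D \<inter> (C \<union> Y)) \<le> 2*l"
        proof (rule ccontr)
          assume "D - (C \<union> Y) \<noteq> {}"
          then have "Q D" unfolding Q_def using u2 sep2 that by blast
          then have "card X \<le> card D" by (rule Xmin)
          then show False using cardD by simp
        qed
        have o1: "card (C \<inter> (D \<union> Y)) \<le> card T + card (S \<inter> (C - D))"
        proof -
          have "C \<inter> (D \<union> Y) \<subseteq> T \<union> (S \<inter> (C - D))" using CD T_def S_def by auto
          then have "card (C \<inter> (D \<union> Y)) \<le> card (T \<union> (S \<inter> (C - D)))"
            using finC by (intro card_mono) auto
          also have "\<dots> \<le> card T + card (S \<inter> (C - D))" by (rule card_Un_le)
          finally show ?thesis .
        qed
        have o2: "card (D \<inter> (C \<union> Y)) \<le> card T + card (S \<inter> (D - C))"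
        proof -
          have "D \<inter> (C \<union> Y) \<subseteq> T \<union> (S \<inter> (D - C))" using CD T_def S_def by auto
          then have "card (D \<inter> (C \<union> Y)) \<le> card (T \<union> (S \<inter> (D - C)))"
            using finC by (intro card_mono) auto
          also have "\<dots> \<le> card T + card (S \<inter> (D - C))" by (rule card_Un_le)
          finally show ?thesis .
        qed
        have ab: "card (S \<inter> (C - D)) + card (S \<inter> (D - C)) \<le> card S"
        proof -
          have "card (S \<inter> (C - D)) + card (S \<inter> (D - C)) = card ((S \<inter> (C - D)) \<union> (S \<inter> (D - C)))"
            using finC by (intro card_Un_disjoint[symmetric]) auto
          also have "\<dots> \<le> card S" using finC by (intro card_mono) auto
          finally show ?thesis .
        qed
        have Sl: "card S \<le> 2 * l" using cS S_def by simp
        have Tl: "card T \<le> l" using tl T_def by simp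
        have a1: "card T \<le> card (S \<inter> (C - D))" if "C - (D \<union> Y) = {}"
        proof -
          have "C - D \<subseteq> S \<inter> (C - D)" using that CD S_def by auto
          then have "card (C - D) \<le> card (S \<inter> (C - D))" using finC by (intro card_mono) auto
          thus ?thesis using tC T_def by simp
        qed
        have a2: "card T \<le> card (S \<inter> (D - C))" if "D - (C \<union> Y) = {}"
        proof -
          have "D - C \<subseteq> S \<inter> (D - C)" using that CD S_def by auto
          then have "card (D - C) \<le> card (S \<inter> (D - C))" using finC by (intro card_mono) auto
          thus ?thesis using tD T_def by simp
        qed
        have e1: "C - (D \<union> Y) = {}"
        proof (cases "D - (C \<union> Y) = {}")
          case True
          then have "card T \<le> card (S \<inter> (D - C))" by (rule a2)
          then have "card (C \<inter> (D \<union> Y)) \<le> 2*l" using o1 ab Sl by linarith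
          thus ?thesis by (rule c1)
        next
          case False
          then have "\<not> card (D \<inter> (C \<union> Y)) \<le> 2*l" using c2 by blast
          then have "card (C \<inter> (D \<union> Y)) \<le> 2*l" using o1 o2 ab Sl Tl by linarith
          thus ?thesis by (rule c1)
        qed
        then have "card T \<le> card (S \<inter> (C - D))" by (rule a1)
        then have "card (D \<inter> (C \<union> Y)) \<le> 2*l" using o2 ab Sl by linarith
        then have e2: "D - (C \<union> Y) = {}" by (rule c2)
        have sub: "X - Y \<subseteq> T" using e1 e2 CD T_def by auto
        then have "card (X - Y) \<le> card T" using finC by (intro card_mono) auto
        then have cI: "card (X - Y) \<le> l" using Tl by simp
        have "card (X - Y) + card (X \<inter> Y) \<le> k" using cI cS assms(3) by linarith
        then have "\<not> colourable (X - Y) (ind E (X - Y)) (card (X - Y))" by (rule key)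
        moreover have "colourable (X - Y) (ind E (X - Y)) (card (X - Y))"
          using finX by (intro col_card) auto
        ultimately show False by blast
      qed
    qed
  qed
qed

end
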